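(* Let $S$ be a $p\times p$ random sample covariance matrix (based on $n$ observations) whose diagonal entries satisfy, marginally, $$\hat\sigma_\nu^2:=S_{\nu\nu}\sim\sigma_\nu^2\,\chi^2_{(n)}/n,\qquad \nu=1,\dots,p,$$ for some population variances $\sigma_\nu^2>0$, with no assumption on the joint distribution of $\{\hat\sigma_\nu^2\}$. Let $1\le k\le p$, let $\sigma_{(1)}^2\ge\sigma_{(2)}^2\ge\cdots$ and $\hat\sigma_{(1)}^2\ge\hat\sigma_{(2)}^2\ge\cdots$ denote the ordered population and sample variances, let $\gamma>0$, and put $\alpha_n=\gamma n^{-1/2}(\log n)^{1/2}$. Define $$I_{in}=\{l:\sigma_l^2\ge\sigma_{(k)}^2(1+\alpha_n)\},\qquad I_{out}=\{l:\sigma_l^2\le\sigma_{(k)}^2(1-\alpha_n)\},$$ and the events of false exclusion and false inclusion $$FE=\bigcup_{l\in I_{in}}\{\hat\sigma_l^2<\hat\sigma_{(k)}^2\},\qquad FI=\bigcup_{l\in I_{out}}\{\hat\sigma_l^2\ge\hat\sigma_{(k)}^2\}.$$ Then $$P\{FE\cup FI\}\le 2pk\,n^{-b(\gamma)}+k\,n^{-(1-2\alpha_n)b(\gamma)},\qquad b(\gamma)=\Bigl[\frac{\gamma\sqrt3}{4+2\sqrt3}\Bigr]^2.$$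
   Context: $\chi^2_{(n)}$ denotes a chi-square random variable with $n$ degrees of freedom. The selected subset $\hat I_k$ consists of the indices of the $k$ largest sample variances $\hat\sigma_\nu^2$; $FE$ means some index in $I_{in}$ is not selected and $FI$ means some index in $I_{out}$ is selected. *)

theory Defs
  imports "HOL-Probability.Probability"
begin

definition chi_square_density :: "nat \<Rightarrow> real \<Rightarrow> real" where
  "chi_square_density n x =
     (if x > 0 then x powr (real n / 2 - 1) * exp (- x / 2) / (2 powr (real n / 2) * Gamma (real n / 2))
      else 0)"

definition chi_square_law :: "nat \<Rightarrow> real measure" where
  "chi_square_law n = density lborel (\<lambda>x. ennreal (chi_square_density n x))"

definition kth_largest :: "nat \<Rightarrow> (nat \<Rightarrow> real) \<Rightarrow> nat \<Rightarrow> real" where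
  "kth_largest k f p = rev (sort (map f [0..<p])) ! (k - 1)"

end

theory Submission
  imports Defs
begin

lemma gamma_stretch:
  fixes m c :: real
  assumes m: "m > 0" and c: "c > 0"
  shows "(\<integral>\<^sup>+x. ennreal (indicator {0..} x * x powr (m - 1) * exp (- c * x)) \<partial>lborel)
         = ennreal (Gamma m / c powr m)"
proof -
  let ?g = "\<lambda>t::real. ennreal (indicator {0..} t * t powr (m - 1) / exp t)"
  have "ennreal (Gamma m) = (\<integral>\<^sup>+t. ?g t \<partial>lborel)"
    using Gamma_conv_nn_integral_real[OF m] by simp
  also have "lborel = density (distr lborel borel ((*) c)) (\<lambda>_. \<bar>c\<bar>)"
    using c by (intro lborel_distr_mult') simp
  also have "(\<integral>\<^sup>+t. ?g t \<partial>density (distr lborel borel ((*) c)) (\<lambda>_. \<bar>c\<bar>))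
      = (\<integral>\<^sup>+t. ennreal \<bar>c\<bar> * ?g t \<partial>distr lborel borel ((*) c))"
    by (subst nn_integral_density) auto
  also have "\<dots> = (\<integral>\<^sup>+x. ennreal \<bar>c\<bar> * ?g (c * x) \<partial>lborel)"
    by (subst nn_integral_distr) auto
  also have "\<dots> = (\<integral>\<^sup>+x. ennreal (c powr m) * ennreal (indicator {0..} x * x powr (m - 1) * exp (- c * x)) \<partial>lborel)"
  proof (intro nn_integral_cong)
    fix x :: real
    show "ennreal \<bar>c\<bar> * ?g (c * x) = ennreal (c powr m) * ennreal (indicator {0..} x * x powr (m - 1) * exp (- c * x))"
    proof (cases "x \<ge> 0")
      case True
      have "\<bar>c\<bar> * ((c * x) powr (m - 1) / exp (c * x)) = c powr m * (x powr (m - 1) * exp (- c * x))"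
        using c True by (simp add: powr_mult powr_diff exp_minus field_simps)
      thus ?thesis using True c
        by (simp add: indicator_def ennreal_mult'[symmetric] zero_le_mult_iff)
    next
      case False
      thus ?thesis using c by (simp add: indicator_def zero_le_mult_iff)
    qed
  qed
  also have "\<dots> = ennreal (c powr m) * (\<integral>\<^sup>+x. ennreal (indicator {0..} x * x powr (m - 1) * exp (- c * x)) \<partial>lborel)"
    by (subst nn_integral_cmult) auto
  finally have eq: "ennreal (Gamma m) = ennreal (c powr m) * (\<integral>\<^sup>+x. ennreal (indicator {0..} x * x powr (m - 1) * exp (- c * x)) \<partial>lborel)" .
  have cp: "c powr m > 0" using c by simp
  have "ennreal (Gamma m / c powr m) = ennreal (Gamma m) * ennreal (1 / c powr m)"
    using cp Gamma_real_pos[OF m] by (simp add: ennreal_mult'[symmetric] divide_inverse)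
  also have "\<dots> = (\<integral>\<^sup>+x. ennreal (indicator {0..} x * x powr (m - 1) * exp (- c * x)) \<partial>lborel)"
  proof -
    let ?I = "(\<integral>\<^sup>+x. ennreal (indicator {0..} x * x powr (m - 1) * exp (- c * x)) \<partial>lborel)"
    have h1: "ennreal (c powr m) * ennreal (1 / c powr m) = 1"
      using cp by (simp add: ennreal_mult'[symmetric])
    hence "ennreal (c powr m) * ?I * ennreal (1 / c powr m) = ?I"
      by (simp only: mult.assoc[of "ennreal (c powr m)"] mult.commute[of ?I] mult.assoc[symmetric] h1 mult_1)
    thus ?thesis unfolding eq .
  qed
  finally show ?thesis by simp
qed

lemma chi_mgf:
  fixes t :: real
  assumes n: "n \<ge> 1" and t: "t < 1/2"
  shows "(\<integral>\<^sup>+x. ennreal (exp (t * x)) \<partial>chi_square_law n) = ennreal ((1 - 2 * t) powr (- (real n / 2)))"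
proof -
  define m where "m = real n / 2"
  define c where "c = 1/2 - t"
  define K where "K = 1 / (2 powr m * Gamma m)"
  have m: "m > 0" using n by (simp add: m_def)
  have c: "c > 0" using t by (simp add: c_def)
  have K: "K > 0" using Gamma_real_pos[OF m] by (simp add: K_def)
  have meas: "(\<lambda>x. ennreal (chi_square_density n x)) \<in> borel_measurable lborel"
    unfolding chi_square_density_def by measurable
  have "(\<integral>\<^sup>+x. ennreal (exp (t * x)) \<partial>chi_square_law n)
      = (\<integral>\<^sup>+x. ennreal (chi_square_density n x) * ennreal (exp (t * x)) \<partial>lborel)"
    unfolding chi_square_law_def using meas by (subst nn_integral_density) auto
  also have "\<dots> = (\<integral>\<^sup>+x. ennreal K * ennreal (indicator {0..} x * x powr (m - 1) * exp (- c * x)) \<partial>lborel)"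
  proof (intro nn_integral_cong)
    fix x :: real
    show "ennreal (chi_square_density n x) * ennreal (exp (t * x)) =
          ennreal K * ennreal (indicator {0..} x * x powr (m - 1) * exp (- c * x))"
    proof (cases "x > 0")
      case True
      have "chi_square_density n x * exp (t * x) = K * (x powr (m - 1) * exp (- c * x))"
        using True unfolding chi_square_density_def K_def c_def m_def
        by (simp add: exp_add[symmetric] field_simps)
      moreover have "chi_square_density n x \<ge> 0"
        using True Gamma_real_pos[OF m] by (simp add: chi_square_density_def m_def)
      ultimately show ?thesis using True K
        by (simp add: indicator_def ennreal_mult'[symmetric] del: ennreal_mult')
    next
      case False
      thus ?thesis by (cases "x = 0") (auto simp: indicator_def chi_square_density_def)
    qed
  qed
  also have "\<dots> = ennreal K * ennreal (Gamma m / c powr m)"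
  proof -
    have g: "(\<integral>\<^sup>+x. ennreal (indicator {0..} x * x powr (m - 1) * exp (- c * x)) \<partial>lborel) = ennreal (Gamma m / c powr m)"
      by (rule gamma_stretch[OF m c])
    show ?thesis by (subst nn_integral_cmult) (simp, simp only: g)
  qed
  also have "\<dots> = ennreal (K * (Gamma m / c powr m))"
    using K by (intro ennreal_mult'[symmetric]) simp
  also have "K * (Gamma m / c powr m) = (1 - 2 * t) powr (- m)"
  proof -
    have "K * (Gamma m / c powr m) = 1 / (2 powr m * c powr m)"
      using Gamma_real_pos[OF m] by (simp add: K_def field_simps)
    also have "2 powr m * c powr m = (2 * c) powr m"
      using c by (simp add: powr_mult)
    also have "2 * c = 1 - 2 * t" by (simp add: c_def)
    finally show ?thesis using t by (simp add: powr_minus_divide)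
  qed
  finally show ?thesis by (simp add: m_def)
qed

lemma chi_emeasure_UNIV: "n \<ge> 1 \<Longrightarrow> emeasure (chi_square_law n) UNIV = 1"
proof -
  assume n: "n \<ge> 1"
  have "emeasure (chi_square_law n) UNIV = (\<integral>\<^sup>+x. ennreal (exp (0 * x)) \<partial>chi_square_law n)"
    by (simp add: chi_square_law_def)
  also have "\<dots> = 1" using chi_mgf[OF n, of 0] by simp
  finally show ?thesis .
qed

lemma space_chi: "space (chi_square_law n) = UNIV" by (simp add: chi_square_law_def)

lemma chi_prob: "n \<ge> 1 \<Longrightarrow> prob_space (chi_square_law n)"
  by (rule prob_spaceI) (metis chi_emeasure_UNIV space_chi)

lemma chi_upper_em:
  fixes l a :: real
  assumes n: "n \<ge> 1" and l: "0 \<le> l" "l < 1/2"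
  shows "emeasure (chi_square_law n) {x. a \<le> x} \<le> ennreal (exp (- l * a) * (1 - 2 * l) powr (- (real n / 2)))"
proof -
  have sets: "sets (chi_square_law n) = sets borel" by (simp add: chi_square_law_def)
  have "emeasure (chi_square_law n) {x. a \<le> x} = (\<integral>\<^sup>+x. indicator {x. a \<le> x} x \<partial>chi_square_law n)"
    using sets by (subst nn_integral_indicator) auto
  also have "\<dots> \<le> (\<integral>\<^sup>+x. ennreal (exp (- l * a)) * ennreal (exp (l * x)) \<partial>chi_square_law n)"
  proof (intro nn_integral_mono)
    fix x :: real
    have "a \<le> x \<Longrightarrow> 1 \<le> exp (- l * a) * exp (l * x)"
    proof -
      assume "a \<le> x"
      hence "l * a \<le> l * x" using l by (intro mult_left_mono) auto
      thus ?thesis by (simp add: exp_add[symmetric])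
    qed
    thus "indicator {x. a \<le> x} x \<le> ennreal (exp (- l * a)) * ennreal (exp (l * x))"
      by (auto simp: indicator_def ennreal_mult'[symmetric] simp del: ennreal_mult')
  qed
  also have "\<dots> = ennreal (exp (- l * a)) * (\<integral>\<^sup>+x. ennreal (exp (l * x)) \<partial>chi_square_law n)"
    using sets by (subst nn_integral_cmult) auto
  also have "\<dots> = ennreal (exp (- l * a)) * ennreal ((1 - 2 * l) powr (- (real n / 2)))"
    using chi_mgf[OF n, of l] l by simp
  also have "\<dots> = ennreal (exp (- l * a) * (1 - 2 * l) powr (- (real n / 2)))"
    by (intro ennreal_mult'[symmetric]) simp
  finally show ?thesis .
qed

lemma chi_lower_em:
  fixes l a :: real
  assumes n: "n \<ge> 1" and l: "0 \<le> l"
  shows "emeasure (chi_square_law n) {x. x \<le> a} \<le> ennreal (exp (l * a) * (1 + 2 * l) powr (- (real n / 2)))"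
proof -
  have sets: "sets (chi_square_law n) = sets borel" by (simp add: chi_square_law_def)
  have "emeasure (chi_square_law n) {x. x \<le> a} = (\<integral>\<^sup>+x. indicator {x. x \<le> a} x \<partial>chi_square_law n)"
    using sets by (subst nn_integral_indicator) auto
  also have "\<dots> \<le> (\<integral>\<^sup>+x. ennreal (exp (l * a)) * ennreal (exp ((- l) * x)) \<partial>chi_square_law n)"
  proof (intro nn_integral_mono)
    fix x :: real
    have "x \<le> a \<Longrightarrow> 1 \<le> exp (l * a) * exp ((- l) * x)"
    proof -
      assume "x \<le> a"
      hence "l * x \<le> l * a" using l by (intro mult_left_mono) auto
      thus ?thesis by (simp add: exp_add[symmetric])
    qed
    thus "indicator {x. x \<le> a} x \<le> ennreal (exp (l * a)) * ennreal (exp ((- l) * x))"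
      by (auto simp: indicator_def ennreal_mult'[symmetric] simp del: ennreal_mult')
  qed
  also have "\<dots> = ennreal (exp (l * a)) * (\<integral>\<^sup>+x. ennreal (exp ((- l) * x)) \<partial>chi_square_law n)"
    using sets by (subst nn_integral_cmult) auto
  also have "\<dots> = ennreal (exp (l * a)) * ennreal ((1 + 2 * l) powr (- (real n / 2)))"
    using chi_mgf[OF n, of "- l"] l by simp
  also have "\<dots> = ennreal (exp (l * a) * (1 + 2 * l) powr (- (real n / 2)))"
    by (intro ennreal_mult'[symmetric]) simp
  finally show ?thesis .
qed

lemma ln_upper_aux:
  fixes d :: real assumes d: "0 \<le> d" "d \<le> 1/3"
  shows "ln (1 + d) \<le> d - 3 * d\<^sup>2 / 8"
proof -
  let ?f = "\<lambda>x::real. x - 3 * x\<^sup>2 / 8 - ln (1 + x)"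
  have "?f 0 \<le> ?f d"
  proof (rule DERIV_nonneg_imp_nondecreasing[OF d(1)])
    fix x :: real assume x: "0 \<le> x" "x \<le> d"
    have "DERIV ?f x :> 1 - 3 * x / 4 - 1 / (1 + x)"
      using x by (auto intro!: derivative_eq_intros simp: power2_eq_square field_simps)
    moreover have "1 - 3 * x / 4 - 1 / (1 + x) \<ge> 0"
    proof -
      have "1 - 3 * x / 4 - 1 / (1 + x) = x * (1 - 3 * x) / (4 * (1 + x))"
        using x by (simp add: field_simps)
      also have "\<dots> \<ge> 0" using x d by (intro divide_nonneg_pos mult_nonneg_nonneg) auto
      finally show ?thesis .
    qed
    ultimately show "\<exists>y. DERIV ?f x :> y \<and> y \<ge> 0" by blast
  qed
  thus ?thesis by simp
qed

lemma ln_lower_aux: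
  fixes d :: real assumes d: "0 \<le> d" "d < 1"
  shows "ln (1 - d) \<le> - d - d\<^sup>2 / 2"
proof -
  let ?f = "\<lambda>x::real. - x - x\<^sup>2 / 2 - ln (1 - x)"
  have "?f 0 \<le> ?f d"
  proof (rule DERIV_nonneg_imp_nondecreasing[OF d(1)])
    fix x :: real assume x: "0 \<le> x" "x \<le> d"
    have "DERIV ?f x :> - 1 - x + 1 / (1 - x)"
      using x d by (auto intro!: derivative_eq_intros simp: power2_eq_square field_simps)
    moreover have "- 1 - x + 1 / (1 - x) \<ge> 0"
    proof -
      have "- 1 - x + 1 / (1 - x) = x\<^sup>2 / (1 - x)"
        using x d by (simp add: field_simps power2_eq_square)
      also have "\<dots> \<ge> 0" using x d by (intro divide_nonneg_pos) auto
      finally show ?thesis .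
    qed
    ultimately show "\<exists>y. DERIV ?f x :> y \<and> y \<ge> 0" by blast
  qed
  thus ?thesis by simp
qed

lemma chi_upper:
  fixes d :: real
  assumes n: "n \<ge> 1" and d: "0 \<le> d" "d \<le> 1/3"
  shows "measure (chi_square_law n) {x. real n * (1 + d) \<le> x} \<le> exp (- 3 * real n * d\<^sup>2 / 16)"
proof -
  define l where "l = d / (2 * (1 + d))"
  have l: "0 \<le> l" "l < 1/2" using d by (auto simp: l_def field_simps)
  have e1: "l * (real n * (1 + d)) = real n * d / 2" using d by (simp add: l_def field_simps)
  have e2: "1 - 2 * l = 1 / (1 + d)" using d by (simp add: l_def field_simps)
  have e3: "(1 / (1 + d)) powr (- (real n / 2)) = exp (real n / 2 * ln (1 + d))"
    using d by (simp add: powr_def ln_div)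
  have "exp (- l * (real n * (1 + d)) * 1) * (1 - 2 * l) powr (- (real n / 2))
        = exp (- real n * d / 2 + real n / 2 * ln (1 + d))"
    by (simp add: e1 e2 e3 exp_add[symmetric])
  also have "\<dots> \<le> exp (- 3 * real n * d\<^sup>2 / 16)"
  proof -
    have "real n / 2 * ln (1 + d) \<le> real n / 2 * (d - 3 * d\<^sup>2 / 8)"
      using ln_upper_aux[OF d] by (intro mult_left_mono) auto
    thus ?thesis by (simp add: algebra_simps)
  qed
  finally have b: "exp (- l * (real n * (1 + d))) * (1 - 2 * l) powr (- (real n / 2)) \<le> exp (- 3 * real n * d\<^sup>2 / 16)"
    by simp
  show ?thesis unfolding measure_def
    by (rule enn2real_leI) (use chi_upper_em[OF n l, of "real n * (1 + d)"] b in \<open>auto intro: order_trans\<close>)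
qed

lemma chi_lower:
  fixes d :: real
  assumes n: "n \<ge> 1" and d: "0 \<le> d" "d < 1"
  shows "measure (chi_square_law n) {x. x \<le> real n * (1 - d)} \<le> exp (- real n * d\<^sup>2 / 4)"
proof -
  define l where "l = d / (2 * (1 - d))"
  have l: "0 \<le> l" using d by (auto simp: l_def)
  have e1: "l * (real n * (1 - d)) = real n * d / 2" using d by (simp add: l_def field_simps)
  have e2: "1 + 2 * l = 1 / (1 - d)" using d by (simp add: l_def field_simps)
  have e3: "(1 / (1 - d)) powr (- (real n / 2)) = exp (real n / 2 * ln (1 - d))"
    using d by (simp add: powr_def ln_div)
  have "exp (l * (real n * (1 - d))) * (1 + 2 * l) powr (- (real n / 2))
        = exp (real n * d / 2 + real n / 2 * ln (1 - d))"
    by (simp add: e1 e2 e3 exp_add)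
  also have "\<dots> \<le> exp (- real n * d\<^sup>2 / 4)"
  proof -
    have "real n / 2 * ln (1 - d) \<le> real n / 2 * (- d - d\<^sup>2 / 2)"
      using ln_lower_aux[OF d] by (intro mult_left_mono) auto
    thus ?thesis by (simp add: algebra_simps)
  qed
  finally have b: "exp (l * (real n * (1 - d))) * (1 + 2 * l) powr (- (real n / 2)) \<le> exp (- real n * d\<^sup>2 / 4)" .
  show ?thesis unfolding measure_def
    by (rule enn2real_leI) (use chi_lower_em[OF n l, of "real n * (1 - d)"] b in \<open>auto intro: order_trans\<close>)
qed

lemma count_filter_sorted:
  fixes f :: "nat \<Rightarrow> real"
  shows "length (filter P (rev (sort (map f [0..<p])))) = card {j. j < p \<and> P (f j)}"
proof -
  have "length (filter P (rev (sort (map f [0..<p])))) = size (mset (filter P (rev (sort (map f [0..<p])))))"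
    by (simp only: size_mset)
  also have "\<dots> = size (mset (filter P (map f [0..<p])))" by simp
  also have "\<dots> = length (filter (P \<circ> f) [0..<p])" by (simp only: size_mset filter_map length_map)
  also have "\<dots> = card {j. j < p \<and> P (f j)}"
    by (subst distinct_length_filter) (auto intro: arg_cong[where f=card])
  finally show ?thesis .
qed

lemma kth_props:
  fixes f :: "nat \<Rightarrow> real"
  assumes k: "1 \<le> k" "k \<le> p"
  shows "card {j. j < p \<and> f j > kth_largest k f p} \<le> k - 1"
    and "k \<le> card {j. j < p \<and> f j \<ge> kth_largest k f p}"
proof -
  define L where "L = rev (sort (map f [0..<p]))"
  define v where "v = kth_largest k f p"
  have v: "v = L ! (k - 1)" by (simp add: v_def L_def kth_largest_def)
  have len: "length L = p" by (simp add: L_def)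
  have sw: "sorted_wrt (\<ge>) L" unfolding L_def
    using sorted_sort[of "map f [0..<p]"] by (simp add: sorted_wrt_rev)
  have desc: "L ! j \<le> L ! i" if "i \<le> j" "j < p" for i j
  proof (cases "i = j")
    case False thus ?thesis using sorted_wrt_nth_less[OF sw, of i j] that len by auto
  qed simp
  have "card {j. j < p \<and> f j > v} = length (filter (\<lambda>x. x > v) L)"
    by (simp add: L_def count_filter_sorted)
  also have "\<dots> = card {i. i < length L \<and> L ! i > v}" by (rule length_filter_conv_card)
  also have "\<dots> \<le> card {..<k - 1}"
  proof (rule card_mono)
    show "{i. i < length L \<and> L ! i > v} \<subseteq> {..<k - 1}"
    proof
      fix i assume "i \<in> {i. i < length L \<and> L ! i > v}"
      hence i: "i < p" "L ! i > v" using len by auto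
      show "i \<in> {..<k - 1}"
      proof (rule ccontr)
        assume "i \<notin> {..<k - 1}"
        hence "k - 1 \<le> i" by auto
        hence "L ! i \<le> L ! (k - 1)" using desc i by auto
        thus False using i v by auto
      qed
    qed
  qed simp
  finally show "card {j. j < p \<and> f j > kth_largest k f p} \<le> k - 1" by (simp add: v_def)
  have "card {..<k} \<le> card {i. i < length L \<and> L ! i \<ge> v}"
  proof (rule card_mono)
    show "{..<k} \<subseteq> {i. i < length L \<and> L ! i \<ge> v}"
      using desc k len v by auto
  qed simp
  also have "\<dots> = length (filter (\<lambda>x. x \<ge> v) L)" by (rule length_filter_conv_card[symmetric])
  also have "\<dots> = card {j. j < p \<and> f j \<ge> v}"
    by (simp add: L_def count_filter_sorted)
  finally show "k \<le> card {j. j < p \<and> f j \<ge> kth_largest k f p}" by (simp add: v_def)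
qed

lemma transfer_meas:
  fixes Y :: "'a \<Rightarrow> real" and s :: real
  assumes n: "n \<ge> 1" and s: "s > 0" and Y: "Y \<in> borel_measurable M"
    and dist: "distr M borel Y = distr (chi_square_law n) borel (\<lambda>x. s * x / real n)"
    and A: "A \<in> sets borel"
  shows "measure M {\<omega> \<in> space M. Y \<omega> \<in> A} = measure (chi_square_law n) {x. s * x / real n \<in> A}"
proof -
  have "measure M {\<omega> \<in> space M. Y \<omega> \<in> A} = measure M (Y -` A \<inter> space M)"
    by (intro arg_cong[where f="measure M"]) auto
  also have "\<dots> = measure (distr M borel Y) A" using Y A by (simp add: measure_distr)
  also have "\<dots> = measure (distr (chi_square_law n) borel (\<lambda>x. s * x / real n)) A" by (simp add: dist)
  also have "\<dots> = measure (chi_square_law n) ((\<lambda>x. s * x / real n) -` A \<inter> space (chi_square_law n))"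
    using A by (subst measure_distr) (auto simp: chi_square_law_def)
  also have "(\<lambda>x. s * x / real n) -` A \<inter> space (chi_square_law n) = {x. s * x / real n \<in> A}"
    by (auto simp: space_chi)
  finally show ?thesis .
qed

lemma tail_up:
  fixes Y :: "'a \<Rightarrow> real" and s d :: real
  assumes n: "n \<ge> 1" and s: "s > 0" and Y: "Y \<in> borel_measurable M"
    and dist: "distr M borel Y = distr (chi_square_law n) borel (\<lambda>x. s * x / real n)"
    and d: "0 \<le> d" "d \<le> 1/3"
  shows "measure M {\<omega> \<in> space M. s * (1 + d) \<le> Y \<omega>} \<le> exp (- 3 * real n * d\<^sup>2 / 16)"
proof -
  have "measure M {\<omega> \<in> space M. s * (1 + d) \<le> Y \<omega>} = measure M {\<omega> \<in> space M. Y \<omega> \<in> {s * (1 + d)..}}"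
    by simp
  also have "\<dots> = measure (chi_square_law n) {x. s * x / real n \<in> {s * (1 + d)..}}"
    by (rule transfer_meas[OF n s Y dist]) simp
  also have "{x. s * x / real n \<in> {s * (1 + d)..}} = {x. real n * (1 + d) \<le> x}"
  proof -
    have "(s * (1 + d) \<le> s * x / real n) = (real n * (1 + d) \<le> x)" for x
    proof -
      have "(s * (1 + d) \<le> s * x / real n) = (s * (1 + d) \<le> s * (x / real n))" by simp
      also have "\<dots> = (1 + d \<le> x / real n)" using s by (rule mult_le_cancel_left_pos)
      also have "\<dots> = ((1 + d) * real n \<le> x)" using n by (subst le_divide_eq) auto
      finally show ?thesis by (simp add: mult.commute)
    qed
    thus ?thesis by auto
  qed
  also have "measure (chi_square_law n) \<dots> \<le> exp (- 3 * real n * d\<^sup>2 / 16)"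
    by (rule chi_upper[OF n d])
  finally show ?thesis .
qed

lemma tail_low:
  fixes Y :: "'a \<Rightarrow> real" and s d :: real
  assumes n: "n \<ge> 1" and s: "s > 0" and Y: "Y \<in> borel_measurable M"
    and dist: "distr M borel Y = distr (chi_square_law n) borel (\<lambda>x. s * x / real n)"
    and d: "0 \<le> d" "d < 1"
  shows "measure M {\<omega> \<in> space M. Y \<omega> \<le> s * (1 - d)} \<le> exp (- real n * d\<^sup>2 / 4)"
proof -
  have "measure M {\<omega> \<in> space M. Y \<omega> \<le> s * (1 - d)} = measure M {\<omega> \<in> space M. Y \<omega> \<in> {..s * (1 - d)}}"
    by simp
  also have "\<dots> = measure (chi_square_law n) {x. s * x / real n \<in> {..s * (1 - d)}}"
    by (rule transfer_meas[OF n s Y dist]) simp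
  also have "{x. s * x / real n \<in> {..s * (1 - d)}} = {x. x \<le> real n * (1 - d)}"
  proof -
    have "(s * x / real n \<le> s * (1 - d)) = (x \<le> real n * (1 - d))" for x
    proof -
      have "(s * x / real n \<le> s * (1 - d)) = (s * (x / real n) \<le> s * (1 - d))" by simp
      also have "\<dots> = (x / real n \<le> 1 - d)" using s by (rule mult_le_cancel_left_pos)
      also have "\<dots> = (x \<le> (1 - d) * real n)" using n by (subst divide_le_eq) auto
      finally show ?thesis by (simp add: mult.commute)
    qed
    thus ?thesis by auto
  qed
  also have "measure (chi_square_law n) \<dots> \<le> exp (- real n * d\<^sup>2 / 4)"
    by (rule chi_lower[OF n d])
  finally show ?thesis .
qed



lemma le_meas: "f \<in> borel_measurable M \<Longrightarrow> {\<omega> \<in> space M. f \<omega> \<le> (c::real)} \<in> sets M"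
  by measurable
lemma ge_meas: "f \<in> borel_measurable M \<Longrightarrow> {\<omega> \<in> space M. (c::real) \<le> f \<omega>} \<in> sets M"
  by measurable

theorem theorem4:
  fixes M :: "'a measure" and X :: "nat \<Rightarrow> 'a \<Rightarrow> real" and s2 :: "nat \<Rightarrow> real"
    and n p k :: nat and \<gamma> :: real
  assumes "prob_space M"
    and "n \<ge> 1"
    and "1 \<le> k" and "k \<le> p"
    and "\<gamma> > 0"
    and "\<And>\<nu>. \<nu> < p \<Longrightarrow> s2 \<nu> > 0"
    and "\<And>\<nu>. \<nu> < p \<Longrightarrow> X \<nu> \<in> borel_measurable M"
    and "\<And>\<nu>. \<nu> < p \<Longrightarrow>
           distr M borel (X \<nu>) = distr (chi_square_law n) borel (\<lambda>x. s2 \<nu> * x / real n)"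
  shows
    "let \<alpha> = \<gamma> * real n powr (-1/2) * sqrt (ln (real n));
         b = (\<gamma> * sqrt 3 / (4 + 2 * sqrt 3))\<^sup>2;
         I_in = {l. l < p \<and> s2 l \<ge> kth_largest k s2 p * (1 + \<alpha>)};
         I_out = {l. l < p \<and> s2 l \<le> kth_largest k s2 p * (1 - \<alpha>)};
         FE = {\<omega> \<in> space M. \<exists>l\<in>I_in. X l \<omega> < kth_largest k (\<lambda>\<nu>. X \<nu> \<omega>) p};
         FI = {\<omega> \<in> space M. \<exists>l\<in>I_out. X l \<omega> \<ge> kth_largest k (\<lambda>\<nu>. X \<nu> \<omega>) p}
     in measure M (FE \<union> FI)
          \<le> 2 * real p * real k * real n powr (- b) + real k * real n powr (- ((1 - 2 * \<alpha>) * b))"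
proof -
  interpret P: prob_space M by fact
  note n = assms(2) and k = assms(3,4) and g = assms(5) and spos = assms(6)
    and Xm = assms(7) and dist = assms(8)
  define \<alpha> where "\<alpha> = \<gamma> * real n powr (-1/2) * sqrt (ln (real n))"
  define b where "b = (\<gamma> * sqrt 3 / (4 + 2 * sqrt 3))\<^sup>2"
  define S where "S = kth_largest k s2 p"
  define I_in where "I_in = {l. l < p \<and> s2 l \<ge> S * (1 + \<alpha>)}"
  define I_out where "I_out = {l. l < p \<and> s2 l \<le> S * (1 - \<alpha>)}"
  define FE where "FE = {\<omega> \<in> space M. \<exists>l\<in>I_in. X l \<omega> < kth_largest k (\<lambda>\<nu>. X \<nu> \<omega>) p}"
  define FI where "FI = {\<omega> \<in> space M. \<exists>l\<in>I_out. X l \<omega> \<ge> kth_largest k (\<lambda>\<nu>. X \<nu> \<omega>) p}"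
  define N where "N = real n powr (- b)"
  define L where "L = real n powr (- ((1 - 2 * \<alpha>) * b))"
  have N0: "N \<ge> 0" "L \<ge> 0" by (simp_all add: N_def L_def)
  have b0: "b \<ge> 0" by (simp add: b_def)
  have main: "measure M (FE \<union> FI) \<le> 2 * real p * real k * N + real k * L"
  proof (cases "n = 1 \<or> \<alpha> \<ge> 1/2")
    case True
    have "measure M (FE \<union> FI) \<le> 1" by (rule P.prob_le_1)
    also have "1 \<le> 2 * real p * real k * N + real k * L"
    proof (cases "n = 1")
      case True
      hence "N = 1" by (simp add: N_def)
      moreover have "1 \<le> 2 * real p * real k" using k by (simp add: mult_ge1_I)
      ultimately show ?thesis using N0 k by (simp add: add_increasing2)
    next
      case False
      hence "\<alpha> \<ge> 1/2" using True by auto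
      hence "0 \<le> - ((1 - 2 * \<alpha>) * b)" using b0 by (simp add: mult_nonpos_nonneg)
      hence "1 \<le> L" unfolding L_def using n by (intro ge_one_powr_ge_zero) auto
      hence "1 \<le> real k * L" using k by (simp add: mult_ge1_I)
      moreover have "0 \<le> 2 * real p * real k * N" using N0 by simp
      ultimately show ?thesis by linarith
    qed
    finally show ?thesis .
  next
    case False
    hence n2: "n \<ge> 2" and a12: "\<alpha> < 1/2" using n by auto
    have nr: "real n \<ge> 2" using n2 by simp
    have lnpos: "ln (real n) > 0" using nr by simp
    have apos: "\<alpha> > 0" unfolding \<alpha>_def using g nr lnpos by simp
    have r3: "sqrt 3 * sqrt 3 = 3" by simp
    have r3c: "sqrt 3 > 1" by simp
    have a2: "\<alpha>\<^sup>2 = \<gamma>\<^sup>2 * ln (real n) / real n"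
    proof -
      have "(real n powr (-1/2))\<^sup>2 = real n powr (-1/2 + -1/2)"
        by (simp only: power2_eq_square powr_add)
      also have "-1/2 + -1/2 = (-1::real)" by simp
      also have "real n powr (-1) = 1 / real n" using nr by (simp add: powr_minus_divide)
      finally have e: "(real n powr (-1/2))\<^sup>2 = 1 / real n" .
      have "(sqrt (ln (real n)))\<^sup>2 = ln (real n)" using lnpos by simp
      thus ?thesis unfolding \<alpha>_def using e by (simp add: power_mult_distrib)
    qed
    define \<epsilon> where "\<epsilon> = 2 * \<alpha> / (2 + sqrt 3)"
    have ae: "\<alpha> = \<epsilon> * (2 + sqrt 3) / 2"
    proof -
      have "2 + sqrt 3 \<noteq> 0" by (smt (verit) real_sqrt_ge_zero)
      thus ?thesis unfolding \<epsilon>_def by simp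
    qed
    have e0: "\<epsilon> \<ge> 0" using apos by (simp add: \<epsilon>_def)
    have ea: "\<epsilon> \<le> \<alpha>"
    proof -
      have "\<epsilon> * 1 \<le> \<epsilon> * ((2 + sqrt 3) / 2)" using e0 r3c by (intro mult_left_mono) auto
      thus ?thesis using ae by simp
    qed
    have e13: "\<epsilon> \<le> 1/3"
    proof -
      have "2 * \<alpha> < 1" using a12 by simp
      also have "1 < (2 + sqrt 3) / 3" using r3c by simp
      finally show ?thesis unfolding \<epsilon>_def by (simp add: divide_simps add_pos_pos)
    qed
    define Q where "Q = 3 * real n * \<epsilon>\<^sup>2 / 16"
    have bval: "b = 3 * \<gamma>\<^sup>2 / (4 * (2 + sqrt 3)\<^sup>2)"
    proof -
      have "(4 + 2 * sqrt 3)\<^sup>2 = 4 * (2 + sqrt 3)\<^sup>2" by (simp add: power2_eq_square algebra_simps)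
      thus ?thesis unfolding b_def by (simp add: power_divide power_mult_distrib)
    qed
    have Qb: "Q = b * ln (real n)"
    proof -
      have "\<epsilon>\<^sup>2 = 4 * \<alpha>\<^sup>2 / (2 + sqrt 3)\<^sup>2" unfolding \<epsilon>_def by (simp add: power_divide power_mult_distrib)
      thus ?thesis unfolding Q_def bval a2 using nr by (simp add: field_simps)
    qed
    have Q0: "Q \<ge> 0" by (simp add: Q_def)
    have Nexp: "N = exp (- Q)" unfolding N_def Qb using nr by (simp add: powr_def)
    have Lexp: "L = exp (- ((1 - 2 * \<alpha>) * Q))" unfolding L_def Qb using nr by (simp add: powr_def)
    define \<delta>1 where "\<delta>1 = 1 - (1 + \<epsilon>) / (1 + \<alpha>)"
    define \<delta>2 where "\<delta>2 = 1 - (1 - \<alpha>) * (1 + \<epsilon>)"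
    have d1v: "\<delta>1 = (\<epsilon> * sqrt 3 / 2) / (1 + \<alpha>)"
      unfolding \<delta>1_def using apos by (simp add: field_simps ae)
    have d1: "0 \<le> \<delta>1" "\<delta>1 < 1" using apos e0 ea unfolding \<delta>1_def by (auto simp: field_simps)
    have d2v: "\<delta>2 = \<epsilon> * sqrt 3 / 2 + \<alpha> * \<epsilon>"
      unfolding \<delta>2_def by (simp add: algebra_simps ae)
    have d2: "0 \<le> \<delta>2" "\<delta>2 < 1"
    proof -
      show "0 \<le> \<delta>2" using d2v e0 apos by simp
      have "(1 - \<alpha>) * (1 + \<epsilon>) > 0" using a12 e0 by (intro mult_pos_pos) auto
      thus "\<delta>2 < 1" unfolding \<delta>2_def by simp
    qed
    have TL: "exp (- real n * \<delta>1\<^sup>2 / 4) \<le> L"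
    proof -
      have q: "real n * \<delta>1\<^sup>2 / 4 = Q / (1 + \<alpha>)\<^sup>2"
        unfolding d1v Q_def using apos
        by (simp add: power_divide power_mult_distrib field_simps) (simp add: power2_eq_square algebra_simps)
      have poly: "(1 - 2 * \<alpha>) * (1 + \<alpha>)\<^sup>2 \<le> 1"
      proof -
        have "(1 - 2 * \<alpha>) * (1 + \<alpha>)\<^sup>2 = 1 - 3 * \<alpha>\<^sup>2 - 2 * \<alpha> ^ 3"
          by (simp add: power2_eq_square power3_eq_cube algebra_simps)
        moreover have "0 \<le> 3 * \<alpha>\<^sup>2 + 2 * \<alpha> ^ 3" using apos by simp
        ultimately show ?thesis by linarith
      qed
      have "(1 - 2 * \<alpha>) * Q \<le> Q / (1 + \<alpha>)\<^sup>2"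
      proof -
        have "(1 - 2 * \<alpha>) * Q * (1 + \<alpha>)\<^sup>2 \<le> Q"
          using mult_left_mono[OF poly Q0] by (simp add: algebra_simps)
        thus ?thesis using apos by (simp add: field_simps)
      qed
      thus ?thesis unfolding Lexp using q by simp
    qed
    have TN2: "exp (- real n * \<delta>2\<^sup>2 / 4) \<le> N"
    proof -
      have "\<epsilon> * sqrt 3 / 2 \<le> \<delta>2" using d2v apos e0 by simp
      hence "(\<epsilon> * sqrt 3 / 2)\<^sup>2 \<le> \<delta>2\<^sup>2" using e0 by (intro power_mono) auto
      hence "3 * \<epsilon>\<^sup>2 / 4 \<le> \<delta>2\<^sup>2" by (simp add: power_divide power_mult_distrib)
      hence "Q \<le> real n * \<delta>2\<^sup>2 / 4" unfolding Q_def using nr by simp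
      thus ?thesis unfolding Nexp by simp
    qed
    have TN1: "exp (- 3 * real n * \<epsilon>\<^sup>2 / 16) \<le> N" unfolding Nexp Q_def by simp
    define A where "A = (\<lambda>l. {\<omega> \<in> space M. X l \<omega> \<le> s2 l * (1 - \<delta>1)})"
    define B where "B = (\<lambda>j. {\<omega> \<in> space M. s2 j * (1 + \<epsilon>) \<le> X j \<omega>})"
    define D where "D = (\<lambda>j. {\<omega> \<in> space M. X j \<omega> \<le> s2 j * (1 - \<delta>2)})"
    have mA: "measure M (A l) \<le> L" if "l < p" for l
      unfolding A_def using tail_low[OF n spos[OF that] Xm[OF that] dist[OF that] d1] TL by linarith
    have mB: "measure M (B l) \<le> N" if "l < p" for l
      unfolding B_def using tail_up[OF n spos[OF that] Xm[OF that] dist[OF that] e0 e13] TN1 by linarith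
    have mD: "measure M (D l) \<le> N" if "l < p" for l
      unfolding D_def using tail_low[OF n spos[OF that] Xm[OF that] dist[OF that] d2] TN2 by linarith
    have sA: "A l \<in> sets M" if "l < p" for l unfolding A_def using Xm[OF that] by (rule le_meas)
    have sB: "B l \<in> sets M" if "l < p" for l unfolding B_def using Xm[OF that] by (rule ge_meas)
    have sD: "D l \<in> sets M" if "l < p" for l unfolding D_def using Xm[OF that] by (rule le_meas)
    have Spos: "S > 0"
    proof -
      have "S \<in> set (rev (sort (map s2 [0..<p])))" unfolding S_def kth_largest_def
        using k by (intro nth_mem) simp
      then obtain j where "j < p" "S = s2 j" by auto
      thus ?thesis using spos by auto
    qed
    define G where "G = {j. j < p \<and> s2 j > S}"
    define J where "J = {j. j < p \<and> s2 j \<le> S}"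
    have cG: "card G \<le> k - 1" unfolding G_def S_def by (rule kth_props(1)[OF k])
    have "k \<le> card {j. j < p \<and> s2 j \<ge> S}" unfolding S_def by (rule kth_props(2)[OF k])
    then obtain K where K: "K \<subseteq> {j. j < p \<and> s2 j \<ge> S}" "card K = k" "finite K"
      by (rule obtain_subset_with_card_n)
    have IinG: "I_in \<subseteq> G"
    proof
      fix l assume "l \<in> I_in"
      hence "l < p" "s2 l \<ge> S * (1 + \<alpha>)" by (auto simp: I_in_def)
      moreover have "S * (1 + \<alpha>) > S" using Spos apos by simp
      ultimately show "l \<in> G" by (auto simp: G_def)
    qed
    have finG: "finite G" by (simp add: G_def)
    have cIin: "card I_in \<le> k - 1" using card_mono[OF finG IinG] cG by simp
    have cJ: "card J \<le> p" unfolding J_def using card_mono[of "{..<p}" J] by (simp add: J_def subset_eq)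
    have cIK: "card I_out + k \<le> p"
    proof -
      have disj: "I_out \<inter> K = {}"
      proof (rule ccontr)
        assume "I_out \<inter> K \<noteq> {}"
        then obtain j where "j \<in> I_out" "j \<in> K" by auto
        hence "s2 j \<le> S * (1 - \<alpha>)" "s2 j \<ge> S" using K by (auto simp: I_out_def)
        moreover have "S * (1 - \<alpha>) < S" using Spos apos by simp
        ultimately show False by simp
      qed
      have fin: "finite I_out" by (simp add: I_out_def)
      have "card I_out + k = card (I_out \<union> K)" using card_Un_disjoint[OF fin K(3) disj] K(2) by simp
      also have "\<dots> \<le> card {..<p}" using K(1) by (intro card_mono) (auto simp: I_out_def)
      finally show ?thesis by simp
    qed
    have incl: "FE \<union> FI \<subseteq> ((\<Union>l\<in>I_in. A l) \<union> (\<Union>j\<in>J. B j)) \<union> ((\<Union>l\<in>I_out. B l) \<union> (\<Union>j\<in>K. D j))"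
    proof
      fix \<omega> assume w: "\<omega> \<in> FE \<union> FI"
      hence ws: "\<omega> \<in> space M" by (auto simp: FE_def FI_def)
      define kX where "kX = kth_largest k (\<lambda>\<nu>. X \<nu> \<omega>) p"
      have cX1: "card {j. j < p \<and> X j \<omega> > kX} \<le> k - 1" unfolding kX_def by (rule kth_props(1)[OF k])
      have cX2: "k \<le> card {j. j < p \<and> X j \<omega> \<ge> kX}" unfolding kX_def by (rule kth_props(2)[OF k])
      show "\<omega> \<in> ((\<Union>l\<in>I_in. A l) \<union> (\<Union>j\<in>J. B j)) \<union> ((\<Union>l\<in>I_out. B l) \<union> (\<Union>j\<in>K. D j))"
      proof (cases "\<omega> \<in> FE")
        case True
        then obtain l where l: "l \<in> I_in" "X l \<omega> < kX" by (auto simp: FE_def kX_def)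
        show ?thesis
        proof (cases "X l \<omega> \<le> s2 l * (1 - \<delta>1)")
          case True thus ?thesis using l ws by (auto simp: A_def)
        next
          case False
          have "S * (1 + \<epsilon>) \<le> s2 l * (1 - \<delta>1)"
          proof -
            have "s2 l * (1 - \<delta>1) = s2 l * (1 + \<epsilon>) / (1 + \<alpha>)" using apos by (simp add: \<delta>1_def)
            have "S * (1 + \<alpha>) * (1 + \<epsilon>) \<le> s2 l * (1 + \<epsilon>)"
              using l e0 by (intro mult_right_mono) (auto simp: I_in_def)
            hence "S * (1 + \<alpha>) * (1 + \<epsilon>) / (1 + \<alpha>) \<le> s2 l * (1 + \<epsilon>) / (1 + \<alpha>)"
              using apos by (intro divide_right_mono) auto
            moreover have "S * (1 + \<alpha>) * (1 + \<epsilon>) / (1 + \<alpha>) = S * (1 + \<epsilon>)" using apos by simp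
            ultimately show ?thesis by (simp add: \<open>s2 l * (1 - \<delta>1) = s2 l * (1 + \<epsilon>) / (1 + \<alpha>)\<close>)
          qed
          hence lt: "S * (1 + \<epsilon>) < kX" using False l by simp
          have "\<not> {j. j < p \<and> X j \<omega> \<ge> kX} \<subseteq> G"
          proof
            assume "{j. j < p \<and> X j \<omega> \<ge> kX} \<subseteq> G"
            hence "card {j. j < p \<and> X j \<omega> \<ge> kX} \<le> card G" using finG by (rule card_mono[rotated])
            thus False using cX2 cG k by simp
          qed
          then obtain j where j: "j < p" "X j \<omega> \<ge> kX" "\<not> s2 j > S" by (auto simp: G_def)
          have "s2 j * (1 + \<epsilon>) \<le> S * (1 + \<epsilon>)" using j e0 by (intro mult_right_mono) auto
          hence "\<omega> \<in> B j" using j lt ws by (auto simp: B_def)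
          moreover have "j \<in> J" using j by (auto simp: J_def)
          ultimately show ?thesis by auto
        qed
      next
        case False
        hence "\<omega> \<in> FI" using w by auto
        then obtain l where l: "l \<in> I_out" "X l \<omega> \<ge> kX" by (auto simp: FI_def kX_def)
        show ?thesis
        proof (cases "s2 l * (1 + \<epsilon>) \<le> X l \<omega>")
          case True thus ?thesis using l ws by (auto simp: B_def)
        next
          case False
          have "s2 l * (1 + \<epsilon>) \<le> S * (1 - \<alpha>) * (1 + \<epsilon>)"
            using l e0 by (intro mult_right_mono) (auto simp: I_out_def)
          hence lt: "kX < S * (1 - \<alpha>) * (1 + \<epsilon>)" using False l by simp
          have "\<exists>j\<in>K. \<omega> \<in> D j"
          proof (rule ccontr)
            assume "\<not> (\<exists>j\<in>K. \<omega> \<in> D j)"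
            hence "\<forall>j\<in>K. X j \<omega> > s2 j * (1 - \<delta>2)" using ws by (auto simp: D_def)
            have "K \<subseteq> {j. j < p \<and> X j \<omega> > kX}"
            proof
              fix j assume jK: "j \<in> K"
              hence j: "j < p" "s2 j \<ge> S" using K(1) by auto
              have "S * ((1 - \<alpha>) * (1 + \<epsilon>)) \<le> s2 j * ((1 - \<alpha>) * (1 + \<epsilon>))"
                using j a12 e0 by (intro mult_right_mono) auto
              moreover have "s2 j * (1 - \<delta>2) = s2 j * ((1 - \<alpha>) * (1 + \<epsilon>))" by (simp add: \<delta>2_def)
              ultimately show "j \<in> {j. j < p \<and> X j \<omega> > kX}"
                using \<open>\<forall>j\<in>K. X j \<omega> > s2 j * (1 - \<delta>2)\<close> jK lt j by (auto simp: mult.assoc)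
            qed
            hence "card K \<le> card {j. j < p \<and> X j \<omega> > kX}" by (intro card_mono) auto
            thus False using cX1 K(2) k by simp
          qed
          thus ?thesis by auto
        qed
      qed
    qed
    have fin_sets: "finite I_in" "finite J" "finite I_out"
      by (simp_all add: I_in_def J_def I_out_def)
    have subs: "I_in \<subseteq> {..<p}" "J \<subseteq> {..<p}" "I_out \<subseteq> {..<p}" "K \<subseteq> {..<p}"
      using K(1) by (auto simp: I_in_def J_def I_out_def)
    have U1: "(\<Union>l\<in>I_in. A l) \<in> sets M" using subs sA by blast
    have U2: "(\<Union>l\<in>J. B l) \<in> sets M" using subs sB by blast
    have U3: "(\<Union>l\<in>I_out. B l) \<in> sets M" using subs sB by blast
    have U4: "(\<Union>l\<in>K. D l) \<in> sets M" using subs sD by blast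
    have "measure M (FE \<union> FI) \<le> measure M (((\<Union>l\<in>I_in. A l) \<union> (\<Union>j\<in>J. B j)) \<union> ((\<Union>l\<in>I_out. B l) \<union> (\<Union>j\<in>K. D j)))"
      using incl U1 U2 U3 U4 by (intro P.finite_measure_mono) auto
    also have "\<dots> \<le> measure M ((\<Union>l\<in>I_in. A l) \<union> (\<Union>j\<in>J. B j)) + measure M ((\<Union>l\<in>I_out. B l) \<union> (\<Union>j\<in>K. D j))"
      using U1 U2 U3 U4 by (intro measure_Un_le) auto
    also have "\<dots> \<le> (measure M (\<Union>l\<in>I_in. A l) + measure M (\<Union>j\<in>J. B j)) + (measure M (\<Union>l\<in>I_out. B l) + measure M (\<Union>j\<in>K. D j))"
      using U1 U2 U3 U4 by (intro add_mono measure_Un_le) auto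
    also have "\<dots> \<le> (real (card I_in) * L + real (card J) * N) + (real (card I_out) * N + real (card K) * N)"
    proof (intro add_mono)
      show "measure M (\<Union>l\<in>I_in. A l) \<le> real (card I_in) * L"
        using subs by (intro order_trans[OF measure_UNION_le sum_bounded_above] fin_sets sA mA) auto
      show "measure M (\<Union>l\<in>J. B l) \<le> real (card J) * N"
        using subs by (intro order_trans[OF measure_UNION_le sum_bounded_above] fin_sets sB mB) auto
      show "measure M (\<Union>l\<in>I_out. B l) \<le> real (card I_out) * N"
        using subs by (intro order_trans[OF measure_UNION_le sum_bounded_above] fin_sets sB mB) auto
      show "measure M (\<Union>l\<in>K. D l) \<le> real (card K) * N"
        using subs by (intro order_trans[OF measure_UNION_le sum_bounded_above] K(3) sD mD) auto
    qed
    also have "\<dots> \<le> 2 * real p * real k * N + real k * L"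
    proof -
      have "real (card I_in) * L \<le> real k * L" using cIin N0 by (intro mult_right_mono) auto
      moreover have "real (card J) + real (card I_out) + real (card K) \<le> 2 * real p * real k"
      proof -
        have "real (card J) + real (card I_out) + real (card K) \<le> 2 * real p"
          using cJ cIK K(2) by linarith
        also have "\<dots> \<le> 2 * real p * real k" using k by simp
        finally show ?thesis .
      qed
      hence "(real (card J) + real (card I_out) + real (card K)) * N \<le> 2 * real p * real k * N"
        using N0 by (intro mult_right_mono) auto
      ultimately show ?thesis by (simp add: algebra_simps)
    qed
    finally show ?thesis .
  qed
  show ?thesis
    unfolding Let_def
    using main by (simp add: \<alpha>_def b_def S_def I_in_def I_out_def FE_def FI_def N_def L_def)
qed

end
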